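(* In the strategic matching-queue model of the context, under the ACR policy it is a dominant strategy for a specialized agent of type $i\in\mathcal{L}\setminus\{0\}$ to join queue $i$; i.e. in equilibrium $\sigma^{\mathrm{ACR}}_{ii}=1$ for all $i\in\mathcal{L}\setminus\{0\}$.
   Context: Types $\mathcal{L}=\{0,\dots,\ell\}$; agents of type $i$ arrive Poisson at rate $\lambda_i>0$, jobs of type $j$ Poisson at rate $\mu_j>0$, independently; type $0$ agents can fulfill all jobs, type $i\ge1$ (specialized) agents only type $i$ jobs; unmatched jobs are lost; waiting agents abandon at exponential rate $\theta>0$. Agent types are private. The ACR policy offers queues $\{0,1,\dots,\ell\}$; a type $0$ job is offered only to queue $0$, a type $j\ge1$ job first to queue $j$ and then to queue $0$; within a queue the job is offered to uniformly random agents (without replacement), each accepting iff compatible (rejection takes no time). Each arriving type $i$ agent joins queue $q$ with probability $\sigma_{iq}$ and never switches; agents choose queues to minimize expected steady-state waiting time until match. Joining queue $i$ being a dominant strategy means that for every profile of the other agents, the expected waiting time of a type $i$ agent in queue $i$ is no larger than in any other queue. *)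

theory Defs
  imports "HOL-Probability.Probability"
begin

text \<open>
  Types and queues are 0..l.  A (system) state records, for every queue r and
  agent type k, the number  n r k  of waiting agents of type k in queue r.
  The lambda/mu/theta parameters and the profile sigma (sigma k r = probability
  that an arriving type k agent joins queue r) determine a continuous-time
  Markov chain.  A tagged agent of type i in queue q is modelled by an extra
  agent added to the population; its expected sojourn time (time until it is
  matched or abandons) is the minimal nonnegative solution of the standard
  expected-hitting-time equations (least fixed point in ennreal).
\<close>

type_synonym state = "nat \<Rightarrow> nat \<Rightarrow> nat"

definition incr :: "state \<Rightarrow> nat \<Rightarrow> nat \<Rightarrow> state" where
  "incr n r k = n(r := (n r)(k := n r k + 1))"

definition decr :: "state \<Rightarrow> nat \<Rightarrow> nat \<Rightarrow> state" where
  "decr n r k = n(r := (n r)(k := n r k - 1))"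

definition valid_state :: "nat \<Rightarrow> state \<Rightarrow> bool" where
  "valid_state l n \<longleftrightarrow> (\<forall>r k. (l < r \<or> l < k) \<longrightarrow> n r k = 0)"

text \<open>agent type k can fulfil job type j\<close>
definition compat :: "nat \<Rightarrow> nat \<Rightarrow> bool" where
  "compat k j \<longleftrightarrow> k = 0 \<or> k = j"

definition compat_count :: "nat \<Rightarrow> state \<Rightarrow> nat \<Rightarrow> nat \<Rightarrow> nat" where
  "compat_count l m r j = (\<Sum>k\<le>l. if compat k j then m r k else 0)"

text \<open>ACR routing: the queue in which a type j job is matched (if any)\<close>
definition route :: "nat \<Rightarrow> state \<Rightarrow> nat \<Rightarrow> nat option" where
  "route l m j =
     (if j = 0 then (if 0 < compat_count l m 0 0 then Some 0 else None)
      else if 0 < compat_count l m j j then Some j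
      else if 0 < compat_count l m 0 j then Some 0
      else None)"

text \<open>population including the (optional) tagged agent (queue q, type i)\<close>
definition with_tagged :: "state \<Rightarrow> (nat \<times> nat) option \<Rightarrow> state" where
  "with_tagged n t = (case t of None \<Rightarrow> n | Some (q, i) \<Rightarrow> incr n q i)"

text \<open>transition rate from n to n' of the non-tagged agents, given the optional tagged agent t.
  Within the matching queue the job is accepted by a uniformly random compatible agent.\<close>
definition rate :: "nat \<Rightarrow> (nat \<Rightarrow> real) \<Rightarrow> (nat \<Rightarrow> real) \<Rightarrow> real \<Rightarrow> (nat \<Rightarrow> nat \<Rightarrow> real)
                    \<Rightarrow> (nat \<times> nat) option \<Rightarrow> state \<Rightarrow> state \<Rightarrow> real" where
  "rate l lam mu \<theta> \<sigma> t n n' =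
     (\<Sum>k\<le>l. \<Sum>r\<le>l. if n' = incr n r k then lam k * \<sigma> k r else 0)
   + (\<Sum>r\<le>l. \<Sum>k\<le>l. if 0 < n r k \<and> n' = decr n r k then \<theta> * real (n r k) else 0)
   + (\<Sum>j\<le>l. case route l (with_tagged n t) j of
          None \<Rightarrow> 0
        | Some r \<Rightarrow> (\<Sum>k\<le>l. if compat k j \<and> 0 < n r k \<and> n' = decr n r k
                         then mu j * real (n r k) / real (compat_count l (with_tagged n t) r j)
                         else 0))"

text \<open>rate at which a tagged agent of type i in queue q leaves (abandonment or match)\<close>
definition exit_rate :: "nat \<Rightarrow> (nat \<Rightarrow> real) \<Rightarrow> real \<Rightarrow> nat \<Rightarrow> nat \<Rightarrow> state \<Rightarrow> real" where
  "exit_rate l mu \<theta> i q n =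
     \<theta> + (\<Sum>j\<le>l. if route l (incr n q i) j = Some q \<and> compat i j
                 then mu j / real (compat_count l (incr n q i) q j) else 0)"

text \<open>expected remaining sojourn time of a tagged type i agent in queue q when the other
  agents are in state n: minimal nonnegative solution of
  h n = (1 + sum_n' Q(n,n') h n') / (exit rate + sum_n' Q(n,n')).\<close>
definition sojourn :: "nat \<Rightarrow> (nat \<Rightarrow> real) \<Rightarrow> (nat \<Rightarrow> real) \<Rightarrow> real \<Rightarrow> (nat \<Rightarrow> nat \<Rightarrow> real)
                       \<Rightarrow> nat \<Rightarrow> nat \<Rightarrow> state \<Rightarrow> ennreal" where
  "sojourn l lam mu \<theta> \<sigma> i q =
     lfp (\<lambda>h n. (1 + (\<Sum>\<^sub>\<infinity>n'. ennreal (rate l lam mu \<theta> \<sigma> (Some (q, i)) n n') * h n'))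
              / (ennreal (exit_rate l mu \<theta> i q n)
                 + (\<Sum>\<^sub>\<infinity>n'. ennreal (rate l lam mu \<theta> \<sigma> (Some (q, i)) n n'))))"

definition stationary :: "nat \<Rightarrow> (nat \<Rightarrow> real) \<Rightarrow> (nat \<Rightarrow> real) \<Rightarrow> real \<Rightarrow> (nat \<Rightarrow> nat \<Rightarrow> real)
                          \<Rightarrow> state pmf \<Rightarrow> bool" where
  "stationary l lam mu \<theta> \<sigma> \<pi> \<longleftrightarrow>
     set_pmf \<pi> \<subseteq> {n. valid_state l n} \<and>
     (\<forall>n. ennreal (pmf \<pi> n) * (\<Sum>\<^sub>\<infinity>n'. ennreal (rate l lam mu \<theta> \<sigma> None n n'))
          = (\<Sum>\<^sub>\<infinity>n'. ennreal (pmf \<pi> n') * ennreal (rate l lam mu \<theta> \<sigma> None n' n)))"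

text \<open>expected steady-state waiting time of a type i agent joining queue q
  (arrivals see the stationary distribution)\<close>
definition expected_wait :: "nat \<Rightarrow> (nat \<Rightarrow> real) \<Rightarrow> (nat \<Rightarrow> real) \<Rightarrow> real \<Rightarrow> (nat \<Rightarrow> nat \<Rightarrow> real)
                             \<Rightarrow> state pmf \<Rightarrow> nat \<Rightarrow> nat \<Rightarrow> ennreal" where
  "expected_wait l lam mu \<theta> \<sigma> \<pi> i q =
     (\<Sum>\<^sub>\<infinity>n. ennreal (pmf \<pi> n) * sojourn l lam mu \<theta> \<sigma> i q n)"

definition profile :: "nat \<Rightarrow> (nat \<Rightarrow> nat \<Rightarrow> real) \<Rightarrow> bool" where
  "profile l \<sigma> \<longleftrightarrow> (\<forall>k\<le>l. \<forall>r\<le>l. 0 \<le> \<sigma> k r) \<and> (\<forall>k\<le>l. (\<Sum>r\<le>l. \<sigma> k r) = 1)"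

end

theory Submission
  imports Defs
begin


definition Yset :: "nat \<Rightarrow> (nat \<times> nat \<times> nat) set" where
  "Yset l = {0,1,2::nat} \<times> {..l} \<times> {..l}"

definition rq :: "nat \<Rightarrow> state \<Rightarrow> (nat \<times> nat) option \<Rightarrow> nat \<Rightarrow> nat" where
  "rq l n t j = (case route l (with_tagged n t) j of None \<Rightarrow> 0 | Some r \<Rightarrow> r)"

definition jD :: "nat \<Rightarrow> (nat \<times> nat) option \<Rightarrow> state \<Rightarrow> nat \<times> nat \<times> nat \<Rightarrow> state" where
  "jD l t n y = (case y of (g,a,b) \<Rightarrow>
     if g = 0 then incr n b a else if g = 1 then decr n a b else decr n (rq l n t a) b)"

definition jV :: "nat \<Rightarrow> (nat \<Rightarrow> real) \<Rightarrow> (nat \<Rightarrow> real) \<Rightarrow> real \<Rightarrow> (nat \<Rightarrow> nat \<Rightarrow> real)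
    \<Rightarrow> (nat \<times> nat) option \<Rightarrow> state \<Rightarrow> nat \<times> nat \<times> nat \<Rightarrow> real" where
  "jV l lam mu \<theta> \<sigma> t n y = (case y of (g,a,b) \<Rightarrow>
     if g = 0 then lam a * \<sigma> a b
     else if g = 1 then (if 0 < n a b then \<theta> * real (n a b) else 0)
     else (case route l (with_tagged n t) a of None \<Rightarrow> 0
           | Some r \<Rightarrow> if compat b a \<and> 0 < n r b
                then mu a * real (n r b) / real (compat_count l (with_tagged n t) r a) else 0))"

lemma rate_repr:
  "rate l lam mu \<theta> \<sigma> t n n' =
    (\<Sum>y\<in>Yset l. if n' = jD l t n y then jV l lam mu \<theta> \<sigma> t n y else 0)"
proof -
  have split3: "(\<Sum>y\<in>Yset l. f y) = (\<Sum>a\<le>l. \<Sum>b\<le>l. f (0,a,b)) + (\<Sum>a\<le>l. \<Sum>b\<le>l. f (1,a,b))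
      + (\<Sum>a\<le>l. \<Sum>b\<le>l. f (2,a,b))" for f :: "nat \<times> nat \<times> nat \<Rightarrow> real"
  proof -
    have "sum f ({0,1,2} \<times> ({..l} \<times> {..l})) = (\<Sum>g\<in>{0,1,2::nat}. \<Sum>p\<in>{..l} \<times> {..l}. f (g,p))"
      by (rule sum.cartesian_product[symmetric, where g="\<lambda>g p. f (g,p)", simplified])
    moreover have "(\<Sum>p\<in>{..l} \<times> {..l}. f (g,p)) = (\<Sum>a\<le>l. \<Sum>b\<le>l. f (g,a,b))" for g
      by (rule sum.cartesian_product[symmetric, where g="\<lambda>a b. f (g,a,b)", simplified])
    ultimately show ?thesis unfolding Yset_def by simp
  qed
  have g3: "(case route l (with_tagged n t) j of None \<Rightarrow> 0
        | Some r \<Rightarrow> (\<Sum>k\<le>l. if compat k j \<and> 0 < n r k \<and> n' = decr n r k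
                         then mu j * real (n r k) / real (compat_count l (with_tagged n t) r j)
                         else 0))
     = (\<Sum>k\<le>l. if n' = jD l t n (2,j,k) then jV l lam mu \<theta> \<sigma> t n (2,j,k) else 0)" for j
  proof (cases "route l (with_tagged n t) j")
    case None
    then show ?thesis by (auto simp: jV_def intro!: sum.neutral)
  next
    case (Some r)
    then show ?thesis by (auto simp: jD_def jV_def rq_def intro!: sum.cong)
  qed
  have e1: "(\<Sum>k\<le>l. \<Sum>r\<le>l. if n' = incr n r k then lam k * \<sigma> k r else 0)
     = (\<Sum>a\<le>l. \<Sum>b\<le>l. if n' = jD l t n (0,a,b) then jV l lam mu \<theta> \<sigma> t n (0,a,b) else 0)"
    by (auto simp: jD_def jV_def intro!: sum.cong)
  have e2: "(\<Sum>r\<le>l. \<Sum>k\<le>l. if 0 < n r k \<and> n' = decr n r k then \<theta> * real (n r k) else 0)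
     = (\<Sum>a\<le>l. \<Sum>b\<le>l. if n' = jD l t n (1,a,b) then jV l lam mu \<theta> \<sigma> t n (1,a,b) else 0)"
    by (auto simp: jD_def jV_def intro!: sum.cong)
  show ?thesis
    unfolding split3 rate_def g3 e1 e2 by simp
qed

lemma infsum_repr:
  fixes h :: "state \<Rightarrow> ennreal"
  assumes "finite Y" "\<And>y. y \<in> Y \<Longrightarrow> 0 \<le> V y"
  shows "(\<Sum>\<^sub>\<infinity>n'. ennreal (\<Sum>y\<in>Y. if n' = D y then V y else 0) * h n')
       = (\<Sum>y\<in>Y. ennreal (V y) * h (D y))"
proof -
  have eq: "ennreal (\<Sum>y\<in>Y. if n' = D y then V y else 0) * h n'
      = (\<Sum>y\<in>Y. if n' = D y then ennreal (V y) * h (D y) else 0)" for n'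
  proof -
    have "ennreal (\<Sum>y\<in>Y. if n' = D y then V y else 0) = (\<Sum>y\<in>Y. ennreal (if n' = D y then V y else 0))"
      using assms by (subst sum_ennreal) auto
    then show ?thesis by (auto simp add: sum_distrib_right intro!: sum.cong)
  qed
  have "(\<Sum>\<^sub>\<infinity>n'. (\<Sum>y\<in>Y. if n' = D y then ennreal (V y) * h (D y) else 0))
     = (\<Sum>\<^sub>\<infinity>n'\<in>D ` Y. (\<Sum>y\<in>Y. if n' = D y then ennreal (V y) * h (D y) else 0))"
    by (rule infsum_cong_neutral) (auto intro!: sum.neutral)
  also have "\<dots> = (\<Sum>n'\<in>D ` Y. (\<Sum>y\<in>Y. if n' = D y then ennreal (V y) * h (D y) else 0))"
    using assms by simp
  also have "\<dots> = (\<Sum>y\<in>Y. \<Sum>n'\<in>D ` Y. if n' = D y then ennreal (V y) * h (D y) else 0)"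
    by (rule sum.swap)
  also have "\<dots> = (\<Sum>y\<in>Y. ennreal (V y) * h (D y))"
    using assms by (auto intro!: sum.cong simp: sum.delta')
  finally show ?thesis by (simp add: eq)
qed




lemma rho_step:
  fixes R e A \<theta> W s k :: real
  assumes "0 \<le> R" "R \<le> A + \<theta> * s" "\<theta> \<le> e" "0 < \<theta>" "0 < A" "0 \<le> W" "0 \<le> s" "0 \<le> k"
  shows "R * (W * ((A + \<theta> * (s + 1)) / (A + \<theta> * (s + 1 + k)))) / (e + R)
     \<le> W * ((A + \<theta> * s) / (A + \<theta> * (s + (k + 1))))"
proof -
  have p1: "0 < A + \<theta> * s" using assms by (simp add: add_pos_nonneg)
  have p2: "0 < A + \<theta> * (s + 1 + k)" using assms by (simp add: add_pos_nonneg)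
  have p3: "0 < e + R" using assms by linarith
  have q: "R / (e + R) \<le> (A + \<theta> * s) / (A + \<theta> * (s + 1))"
  proof -
    have "R * (A + \<theta> * (s + 1)) \<le> (A + \<theta> * s) * (e + R)"
    proof -
      have "R * \<theta> \<le> (A + \<theta> * s) * e"
        using mult_mono[OF assms(2) assms(3)] assms by (simp add: mult.commute)
      then show ?thesis by (simp add: algebra_simps)
    qed
    then show ?thesis using p3 p1 assms
      by (simp add: divide_simps add_pos_nonneg)
  qed
  have "R * (W * ((A + \<theta> * (s + 1)) / (A + \<theta> * (s + 1 + k)))) / (e + R)
      = (R / (e + R)) * (W * ((A + \<theta> * (s + 1)) / (A + \<theta> * (s + 1 + k))))"
    by simp
  also have "\<dots> \<le> ((A + \<theta> * s) / (A + \<theta> * (s + 1))) * (W * ((A + \<theta> * (s + 1)) / (A + \<theta> * (s + 1 + k))))"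
    by (rule mult_right_mono[OF q]) (use assms p2 in \<open>simp add: add_pos_nonneg\<close>)
  also have "\<dots> = W * ((A + \<theta> * s) / (A + \<theta> * (s + (k + 1))))"
  proof -
    have "0 < A + \<theta> * (s + 1)" using assms by (simp add: add_pos_nonneg)
    then have y: "A + \<theta> * (s + 1) \<noteq> 0" by linarith
    have z: "A + \<theta> * (s + 1 + k) = A + \<theta> * (s + (k + 1))" by (simp add: algebra_simps)
    have gen: "y \<noteq> 0 \<Longrightarrow> x / y * (W * (y / z)) = W * (x / z)" for x y z :: real
      by (simp add: divide_simps)
    show ?thesis unfolding z by (rule gen[OF y])
  qed
  finally show ?thesis .
qed

lemma lfp_lower_generic:
  fixes F :: "(state \<Rightarrow> ennreal) \<Rightarrow> state \<Rightarrow> ennreal" and Y :: "'y set"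
    and V :: "state \<Rightarrow> 'y \<Rightarrow> real" and D :: "state \<Rightarrow> 'y \<Rightarrow> state" and e :: "state \<Rightarrow> real"
    and sz :: "state \<Rightarrow> nat" and w :: "state \<Rightarrow> ennreal"
  assumes F: "\<And>h n. F h n = (1 + (\<Sum>y\<in>Y. ennreal (V n y) * h (D n y)))
                 / (ennreal (e n) + (\<Sum>y\<in>Y. ennreal (V n y)))"
    and fin: "finite Y" and Vnn: "\<And>n y. y \<in> Y \<Longrightarrow> 0 \<le> V n y"
    and th: "0 < \<theta>" and eth: "\<And>n. \<theta> \<le> e n" and A: "0 < A"
    and Rb: "\<And>n. (\<Sum>y\<in>Y. V n y) \<le> A + \<theta> * real (sz n)"
    and szD: "\<And>n y. y \<in> Y \<Longrightarrow> sz (D n y) \<le> Suc (sz n)"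
    and wb: "\<And>n. w n \<le> ennreal W" and W: "0 \<le> W" and sub: "\<And>n. w n \<le> F w n"
  shows "w n \<le> lfp F n"
proof -
  define \<rho> :: "nat \<Rightarrow> nat \<Rightarrow> real" where "\<rho> k s = (A + \<theta> * real s) / (A + \<theta> * (real s + real k))" for k s
  have mono: "mono F"
  proof (rule monoI, rule le_funI)
    fix h h' :: "state \<Rightarrow> ennreal" and n assume "h \<le> h'"
    then have "(\<Sum>y\<in>Y. ennreal (V n y) * h (D n y)) \<le> (\<Sum>y\<in>Y. ennreal (V n y) * h' (D n y))"
      by (intro sum_mono mult_left_mono) (auto simp: le_fun_def)
    then show "F h n \<le> F h' n" unfolding F by (intro divide_right_mono_ennreal add_left_mono)
  qed
  have rho_mono: "\<rho> k s \<le> \<rho> k s'" if "s \<le> s'" for k s s'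
  proof -
    have a1: "0 < A + \<theta> * real s" using A th by (simp add: add_pos_nonneg)
    have a2: "0 < A + \<theta> * (real s + real k)" using A th by (simp add: add_pos_nonneg)
    have a3: "0 < A + \<theta> * (real s' + real k)" using A th by (simp add: add_pos_nonneg)
    have "(A + \<theta> * real s) * (A + \<theta> * (real s' + real k)) \<le> (A + \<theta> * real s') * (A + \<theta> * (real s + real k))"
    proof -
      have "\<theta> * real s * (\<theta> * real k) \<le> \<theta> * real s' * (\<theta> * real k)"
        using that th by (intro mult_right_mono mult_left_mono) auto
      moreover have "A * (\<theta> * real s) \<le> A * (\<theta> * real s')" using that th A by (intro mult_left_mono) auto
      ultimately show ?thesis by (simp add: algebra_simps)
    qed
    then show ?thesis unfolding \<rho>_def using a2 a3 by (simp add: divide_simps)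
  qed
  have rho_nn: "0 \<le> \<rho> k s" for k s unfolding \<rho>_def using A th by (simp add: add_pos_nonneg)
  have iter_le: "(F ^^ k) bot \<le> lfp F" for k
  proof (induction k)
    case 0 then show ?case by (simp add: bot_fun_def[symmetric])
  next
    case (Suc k)
    have "(F ^^ Suc k) bot = F ((F ^^ k) bot)" by simp
    also have "\<dots> \<le> F (lfp F)" by (rule monoD[OF mono Suc.IH])
    also have "\<dots> = lfp F" by (rule lfp_unfold[OF mono, symmetric])
    finally show ?case .
  qed
  have main: "\<forall>n. w n \<le> (F ^^ k) bot n + ennreal (W * \<rho> k (sz n))" for k
  proof (induction k)
    case 0
    show ?case
    proof
      fix n
      have "0 < A + \<theta> * real (sz n)" using A th by (simp add: add_pos_nonneg)
      then have "\<rho> 0 (sz n) = 1" unfolding \<rho>_def by simp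
      then show "w n \<le> (F ^^ 0) bot n + ennreal (W * \<rho> 0 (sz n))" using wb by simp
    qed
  next
    case (Suc k)
    show ?case
    proof
      fix n
      define h where "h = (F ^^ k) bot"
      define s where "s = sz n"
      define c where "c = W * \<rho> k (Suc s)"
      define R where "R = (\<Sum>y\<in>Y. V n y)"
      have R0: "0 \<le> R" unfolding R_def using Vnn by (simp add: sum_nonneg)
      have c0: "0 \<le> c" unfolding c_def using W rho_nn by simp
      have en: "0 < e n" using eth[of n] th by linarith
      have sumR: "(\<Sum>y\<in>Y. ennreal (V n y)) = ennreal R" unfolding R_def using Vnn by simp
      have den: "ennreal (e n) + (\<Sum>y\<in>Y. ennreal (V n y)) = ennreal (e n + R)"
        using sumR R0 en by simp
      have wD: "w (D n y) \<le> h (D n y) + ennreal c" if "y \<in> Y" for y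
      proof -
        have "w (D n y) \<le> h (D n y) + ennreal (W * \<rho> k (sz (D n y)))"
          using Suc.IH h_def by blast
        also have "\<dots> \<le> h (D n y) + ennreal c"
          unfolding c_def s_def using rho_mono[OF szD[OF that, of n], of k] W
          by (intro add_left_mono ennreal_leI mult_left_mono) auto
        finally show ?thesis .
      qed
      have "(\<Sum>y\<in>Y. ennreal (V n y) * w (D n y)) \<le> (\<Sum>y\<in>Y. ennreal (V n y) * (h (D n y) + ennreal c))"
        using wD by (intro sum_mono mult_left_mono) auto
      also have "\<dots> = (\<Sum>y\<in>Y. ennreal (V n y) * h (D n y)) + ennreal (R * c)"
      proof -
        have "(\<Sum>y\<in>Y. ennreal (V n y) * ennreal c) = ennreal R * ennreal c"
          using sumR by (simp add: sum_distrib_right[symmetric])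
        then show ?thesis using R0 c0 by (simp add: distrib_left sum.distrib ennreal_mult)
      qed
      finally have num: "(\<Sum>y\<in>Y. ennreal (V n y) * w (D n y)) \<le> (\<Sum>y\<in>Y. ennreal (V n y) * h (D n y)) + ennreal (R * c)" .
      have "w n \<le> F w n" by (rule sub)
      also have "\<dots> \<le> (1 + ((\<Sum>y\<in>Y. ennreal (V n y) * h (D n y)) + ennreal (R * c))) / ennreal (e n + R)"
        unfolding F den by (intro divide_right_mono_ennreal add_left_mono num)
      also have "\<dots> = F h n + ennreal (R * c) / ennreal (e n + R)"
        unfolding F den by (simp add: add_divide_distrib_ennreal add.assoc)
      also have "ennreal (R * c) / ennreal (e n + R) = ennreal (R * c / (e n + R))"
        using R0 c0 en by (subst divide_ennreal[symmetric]) (auto simp del: ennreal_plus)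
      also have "R * c / (e n + R) \<le> W * \<rho> (Suc k) s"
      proof -
        have "R * (W * ((A + \<theta> * (real s + 1)) / (A + \<theta> * (real s + 1 + real k)))) / (e n + R)
           \<le> W * ((A + \<theta> * real s) / (A + \<theta> * (real s + (real k + 1))))"
          by (rule rho_step) (use R0 Rb[of n] eth[of n] th A W in \<open>auto simp: R_def s_def\<close>)
        moreover have "c = W * ((A + \<theta> * (real s + 1)) / (A + \<theta> * (real s + 1 + real k)))"
          unfolding c_def \<rho>_def by (simp add: algebra_simps)
        moreover have "\<rho> (Suc k) s = (A + \<theta> * real s) / (A + \<theta> * (real s + (real k + 1)))"
          unfolding \<rho>_def by (simp add: algebra_simps)
        ultimately show ?thesis by simp
      qed
      finally show "w n \<le> (F ^^ Suc k) bot n + ennreal (W * \<rho> (Suc k) (sz n))"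
        unfolding h_def s_def by (simp add: add_left_mono ennreal_leI)
    qed
  qed
  show ?thesis
  proof (rule ennreal_le_epsilon)
    fix \<epsilon> :: real assume \<epsilon>: "0 < \<epsilon>"
    define s where "s = sz n"
    define k :: nat where "k = nat \<lceil>W * (A + \<theta> * real s) / (\<theta> * \<epsilon>)\<rceil>"
    have kge: "W * (A + \<theta> * real s) / (\<theta> * \<epsilon>) \<le> real k" unfolding k_def by linarith
    have small: "W * \<rho> k s \<le> \<epsilon>"
    proof -
      have p: "0 < A + \<theta> * (real s + real k)" using A th by (simp add: add_pos_nonneg)
      have "W * (A + \<theta> * real s) \<le> \<theta> * \<epsilon> * real k"
        using kge th \<epsilon> by (simp add: divide_le_eq mult.commute)
      also have "\<dots> \<le> \<epsilon> * (A + \<theta> * (real s + real k))"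
        using A th \<epsilon> by (simp add: algebra_simps)
      finally show ?thesis unfolding \<rho>_def using p by (simp add: divide_simps mult.commute)
    qed
    have "w n \<le> (F ^^ k) bot n + ennreal (W * \<rho> k s)" using main s_def by blast
    also have "\<dots> \<le> lfp F n + ennreal \<epsilon>"
      using iter_le[of k] small by (intro add_mono ennreal_leI) (auto simp: le_fun_def)
    finally show "w n \<le> lfp F n + ennreal \<epsilon>" .
  qed
qed




definition dd :: "real \<Rightarrow> real \<Rightarrow> nat \<Rightarrow> real" where
  "dd \<theta> \<mu> c = \<theta> * real c + (if 0 < c then \<mu> else 0)"
definition eB :: "real \<Rightarrow> real \<Rightarrow> nat \<Rightarrow> real" where
  "eB \<theta> \<mu> c = \<theta> + (if c = 0 then \<mu> else 0)"
definition G1 :: "real \<Rightarrow> real \<Rightarrow> real \<Rightarrow> (nat \<Rightarrow> ennreal) \<Rightarrow> nat \<Rightarrow> ennreal" where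
  "G1 a \<theta> \<mu> h c = (1 + ennreal a * h (Suc c) + ennreal (dd \<theta> \<mu> c) * h (c - 1))
       / ennreal (eB \<theta> \<mu> c + a + dd \<theta> \<mu> c)"
definition gr :: "real \<Rightarrow> real \<Rightarrow> real \<Rightarrow> nat \<Rightarrow> real" where
  "gr a \<theta> \<mu> c = enn2real (lfp (G1 a \<theta> \<mu>) c)"

lemma gr_props:
  assumes a: "0 \<le> a" and th: "0 < \<theta>" and mu: "0 < \<mu>"
  shows "0 \<le> gr a \<theta> \<mu> c" and "gr a \<theta> \<mu> c \<le> 1 / \<theta>"
    and "(eB \<theta> \<mu> c + a + dd \<theta> \<mu> c) * gr a \<theta> \<mu> c
          = 1 + a * gr a \<theta> \<mu> (Suc c) + dd \<theta> \<mu> c * gr a \<theta> \<mu> (c - 1)"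
proof -
  show "0 \<le> gr a \<theta> \<mu> c" unfolding gr_def by simp
  have d0: "0 \<le> dd \<theta> \<mu> c" for c unfolding dd_def using th mu by auto
  have e0: "\<theta> \<le> eB \<theta> \<mu> c" for c unfolding eB_def using mu by auto
  have mono: "mono (G1 a \<theta> \<mu>)"
  proof (rule monoI, rule le_funI)
    fix h h' :: "nat \<Rightarrow> ennreal" and c assume "h \<le> h'"
    then show "G1 a \<theta> \<mu> h c \<le> G1 a \<theta> \<mu> h' c" unfolding G1_def
      by (intro divide_right_mono_ennreal add_mono mult_left_mono order_refl) (auto simp: le_fun_def)
  qed
  define K where "K = 1 / \<theta>"
  have K0: "0 \<le> K" unfolding K_def using th by simp
  have pre: "G1 a \<theta> \<mu> (\<lambda>_. ennreal K) \<le> (\<lambda>_. ennreal K)"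
  proof (rule le_funI)
    fix c
    have den: "0 < eB \<theta> \<mu> c + a + dd \<theta> \<mu> c" using e0[of c] d0[of c] a th by linarith
    have "G1 a \<theta> \<mu> (\<lambda>_. ennreal K) c = ennreal (1 + a * K + dd \<theta> \<mu> c * K) / ennreal (eB \<theta> \<mu> c + a + dd \<theta> \<mu> c)"
      unfolding G1_def using a d0[of c] K0 by (simp add: ennreal_mult)
    also have "\<dots> = ennreal ((1 + a * K + dd \<theta> \<mu> c * K) / (eB \<theta> \<mu> c + a + dd \<theta> \<mu> c))"
      using a d0[of c] K0 den by (intro divide_ennreal) auto
    also have "\<dots> \<le> ennreal K"
    proof (rule ennreal_leI)
      have "1 \<le> eB \<theta> \<mu> c * K" unfolding K_def using e0[of c] th by (simp add: divide_simps)
      then have "1 + a * K + dd \<theta> \<mu> c * K \<le> K * (eB \<theta> \<mu> c + a + dd \<theta> \<mu> c)"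
        by (simp add: algebra_simps)
      then show "(1 + a * K + dd \<theta> \<mu> c * K) / (eB \<theta> \<mu> c + a + dd \<theta> \<mu> c) \<le> K"
        using den by (simp add: divide_simps)
    qed
    finally show "G1 a \<theta> \<mu> (\<lambda>_. ennreal K) c \<le> ennreal K" .
  qed
  have bnd: "lfp (G1 a \<theta> \<mu>) c \<le> ennreal K" for c
    using lfp_lowerbound[of "G1 a \<theta> \<mu>", OF pre] by (auto simp: le_fun_def)
  have fin: "lfp (G1 a \<theta> \<mu>) c = ennreal (gr a \<theta> \<mu> c)" for c
  proof -
    have "lfp (G1 a \<theta> \<mu>) c < top" using bnd[of c] by (simp add: le_less_trans)
    then show ?thesis unfolding gr_def by (simp add: ennreal_enn2real_if)
  qed
  have g0: "0 \<le> gr a \<theta> \<mu> c" for c unfolding gr_def by simp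
  show "gr a \<theta> \<mu> c \<le> 1 / \<theta>"
    using bnd[of c] fin[of c] K0 g0[of c] unfolding K_def by simp
  have den: "0 < eB \<theta> \<mu> c + a + dd \<theta> \<mu> c" using e0[of c] d0[of c] a th by linarith
  have "ennreal (gr a \<theta> \<mu> c) = G1 a \<theta> \<mu> (lfp (G1 a \<theta> \<mu>)) c"
    using lfp_unfold[OF mono] fin by metis
  also have "\<dots> = ennreal (1 + a * gr a \<theta> \<mu> (Suc c) + dd \<theta> \<mu> c * gr a \<theta> \<mu> (c - 1))
       / ennreal (eB \<theta> \<mu> c + a + dd \<theta> \<mu> c)"
    unfolding G1_def fin using a d0[of c] g0 by (simp add: ennreal_mult)
  also have "\<dots> = ennreal ((1 + a * gr a \<theta> \<mu> (Suc c) + dd \<theta> \<mu> c * gr a \<theta> \<mu> (c - 1))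
       / (eB \<theta> \<mu> c + a + dd \<theta> \<mu> c))"
    using a d0[of c] g0 den by (intro divide_ennreal) auto
  finally have "gr a \<theta> \<mu> c = (1 + a * gr a \<theta> \<mu> (Suc c) + dd \<theta> \<mu> c * gr a \<theta> \<mu> (c - 1))
       / (eB \<theta> \<mu> c + a + dd \<theta> \<mu> c)"
    using a d0[of c] g0 den by (subst (asm) ennreal_inj) (auto intro!: divide_nonneg_pos add_nonneg_nonneg)
  then show "(eB \<theta> \<mu> c + a + dd \<theta> \<mu> c) * gr a \<theta> \<mu> c
          = 1 + a * gr a \<theta> \<mu> (Suc c) + dd \<theta> \<mu> c * gr a \<theta> \<mu> (c - 1)"
    using den by (simp add: divide_simps) (simp add: mult.commute)
qed




lemma sum_Yset: "(\<Sum>y\<in>Yset l. f y) = (\<Sum>a\<le>l. \<Sum>b\<le>l. f (0,a,b)) + (\<Sum>a\<le>l. \<Sum>b\<le>l. f (1,a,b))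
      + (\<Sum>a\<le>l. \<Sum>b\<le>l. f (2,a,b))" for f :: "nat \<times> nat \<times> nat \<Rightarrow> 'b::comm_monoid_add"
proof -
  have "sum f ({0,1,2} \<times> ({..l} \<times> {..l})) = (\<Sum>g\<in>{0,1,2::nat}. \<Sum>p\<in>{..l} \<times> {..l}. f (g,p))"
    by (rule sum.cartesian_product[symmetric, where g="\<lambda>g p. f (g,p)", simplified])
  moreover have "(\<Sum>p\<in>{..l} \<times> {..l}. f (g,p)) = (\<Sum>a\<le>l. \<Sum>b\<le>l. f (g,a,b))" for g
    by (rule sum.cartesian_product[symmetric, where g="\<lambda>a b. f (g,a,b)", simplified])
  ultimately show ?thesis unfolding Yset_def by (simp add: add.assoc)
qed

lemma incr_apply: "incr n r k r' k' = (if r' = r \<and> k' = k then n r k + 1 else n r' k')"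
  by (simp add: incr_def)
lemma decr_apply: "decr n r k r' k' = (if r' = r \<and> k' = k then n r k - 1 else n r' k')"
  by (simp add: decr_def)

lemma sum_two:
  fixes Y :: "nat \<Rightarrow> 'b::comm_monoid_add"
  assumes "1 \<le> i" "i \<le> l"
  shows "(\<Sum>a\<le>l. if a = 0 \<or> a = i then Y a else 0) = Y 0 + Y i"
proof -
  have "(\<Sum>a\<le>l. if a = 0 \<or> a = i then Y a else 0) = (\<Sum>a\<le>l. (if a = 0 then Y a else 0) + (if a = i then Y a else 0))"
    using assms by (intro sum.cong) auto
  also have "\<dots> = Y 0 + Y i" using assms by (simp add: sum.distrib)
  finally show ?thesis .
qed

lemma cc_spec: "1 \<le> j \<Longrightarrow> j \<le> l \<Longrightarrow> compat_count l n r j = n r 0 + n r j"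
  unfolding compat_count_def compat_def by (rule sum_two)

lemma route_Some_pos: "route l m j = Some r \<Longrightarrow> 0 < compat_count l m r j"
  by (auto simp: route_def split: if_splits)

lemma route_Some_i: "1 \<le> i \<Longrightarrow> route l m j = Some i \<Longrightarrow> j = i"
  by (auto simp: route_def split: if_splits)

lemma route_i: "1 \<le> i \<Longrightarrow> route l m i = (if 0 < compat_count l m i i then Some i
     else if 0 < compat_count l m 0 i then Some 0 else None)"
  by (simp add: route_def)

lemma C_incr: "1 \<le> i \<Longrightarrow> i \<le> l \<Longrightarrow>
   compat_count l (incr n r k) i i = compat_count l n i i + (if r = i \<and> (k = 0 \<or> k = i) then 1 else 0)"
  by (auto simp: cc_spec incr_apply)

lemma C_decr: "1 \<le> i \<Longrightarrow> i \<le> l \<Longrightarrow> 0 < n r k \<Longrightarrow>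
   compat_count l (decr n r k) i i = compat_count l n i i - (if r = i \<and> (k = 0 \<or> k = i) then 1 else 0)"
  by (auto simp: cc_spec decr_apply)

lemma exit_rate_eq:
  assumes "1 \<le> i" "i \<le> l"
  shows "exit_rate l mu \<theta> i q n = \<theta> + (if route l (incr n q i) i = Some q
      then mu i / real (compat_count l (incr n q i) q i) else 0)"
proof -
  have "(\<Sum>j\<le>l. if route l (incr n q i) j = Some q \<and> compat i j
                 then mu j / real (compat_count l (incr n q i) q j) else 0)
     = (\<Sum>j\<le>l. if j = i then (if route l (incr n q i) i = Some q
      then mu i / real (compat_count l (incr n q i) q i) else 0) else 0)"
    using assms by (intro sum.cong) (auto simp: compat_def)
  then show ?thesis unfolding exit_rate_def using assms by simp
qed

context
  fixes l :: nat and lam mu :: "nat \<Rightarrow> real" and \<theta> :: real and \<sigma> :: "nat \<Rightarrow> nat \<Rightarrow> real" and i q :: nat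
  assumes i1: "1 \<le> i" and il: "i \<le> l" and ql: "q \<le> l"
begin

abbreviation "CC n \<equiv> compat_count l n i i"

lemma agg0:
  fixes f :: "nat \<Rightarrow> real"
  shows "(\<Sum>a\<le>l. \<Sum>b\<le>l. jV l lam mu \<theta> \<sigma> t n (0,a,b) * (f (CC (jD l t n (0,a,b))) - f (CC n)))
     = (lam 0 * \<sigma> 0 i + lam i * \<sigma> i i) * (f (Suc (CC n)) - f (CC n))"
proof -
  have "(\<Sum>a\<le>l. \<Sum>b\<le>l. jV l lam mu \<theta> \<sigma> t n (0,a,b) * (f (CC (jD l t n (0,a,b))) - f (CC n)))
     = (\<Sum>a\<le>l. \<Sum>b\<le>l. if b = i then (if a = 0 \<or> a = i then lam a * \<sigma> a i * (f (Suc (CC n)) - f (CC n)) else 0) else 0)"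
    using i1 il by (intro sum.cong refl) (auto simp: jV_def jD_def C_incr)
  also have "\<dots> = (\<Sum>a\<le>l. if a = 0 \<or> a = i then lam a * \<sigma> a i * (f (Suc (CC n)) - f (CC n)) else 0)"
    using il by simp
  also have "\<dots> = (lam 0 * \<sigma> 0 i + lam i * \<sigma> i i) * (f (Suc (CC n)) - f (CC n))"
    using i1 il by (subst sum_two) (auto simp: algebra_simps)
  finally show ?thesis .
qed

lemma agg1:
  fixes f :: "nat \<Rightarrow> real"
  shows "(\<Sum>a\<le>l. \<Sum>b\<le>l. jV l lam mu \<theta> \<sigma> t n (1,a,b) * (f (CC (jD l t n (1,a,b))) - f (CC n)))
     = \<theta> * real (CC n) * (f (CC n - 1) - f (CC n))"
proof -
  have "(\<Sum>a\<le>l. \<Sum>b\<le>l. jV l lam mu \<theta> \<sigma> t n (1,a,b) * (f (CC (jD l t n (1,a,b))) - f (CC n)))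
     = (\<Sum>a\<le>l. \<Sum>b\<le>l. if a = i \<and> (b = 0 \<or> b = i) then \<theta> * real (n i b) * (f (CC n - 1) - f (CC n)) else 0)"
    using i1 il by (intro sum.cong refl) (auto simp: jV_def jD_def C_decr)
  also have "\<dots> = (\<Sum>a\<le>l. if a = i then (\<Sum>b\<le>l. if b = 0 \<or> b = i then \<theta> * real (n i b) * (f (CC n - 1) - f (CC n)) else 0) else 0)"
    by (intro sum.cong refl) auto
  also have "\<dots> = \<theta> * real (n i 0) * (f (CC n - 1) - f (CC n)) + \<theta> * real (n i i) * (f (CC n - 1) - f (CC n))"
    using i1 il by (simp add: sum_two)
  also have "\<dots> = \<theta> * real (CC n) * (f (CC n - 1) - f (CC n))"
    using i1 il by (simp add: cc_spec algebra_simps)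
  finally show ?thesis .
qed

lemma agg2_pt:
  fixes f :: "nat \<Rightarrow> real"
  assumes jl: "j \<le> l" and kl: "k \<le> l"
  shows "jV l lam mu \<theta> \<sigma> t n (2,j,k) * (f (CC (jD l t n (2,j,k))) - f (CC n))
     = (if j = i \<and> 0 < CC (with_tagged n t) \<and> (k = 0 \<or> k = i)
        then mu i * real (n i k) / real (CC (with_tagged n t)) * (f (CC n - 1) - f (CC n)) else 0)"
proof (cases "route l (with_tagged n t) j")
  case None
  have "\<not> (j = i \<and> 0 < CC (with_tagged n t))"
    using None route_i[OF i1, of l "with_tagged n t"] by (auto split: if_splits)
  then show ?thesis using None by (simp add: jV_def)
next
  case (Some r)
  show ?thesis
  proof (cases "r = i")
    case True
    have ji: "j = i" using route_Some_i[OF i1] Some True by blast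
    have pos: "0 < CC (with_tagged n t)" using route_Some_pos[OF Some] True ji by simp
    show ?thesis
    proof (cases "compat k i \<and> 0 < n i k")
      case True
      then have "k = 0 \<or> k = i" by (auto simp: compat_def)
      then show ?thesis using True Some \<open>r = i\<close> ji pos i1 il
        by (auto simp: jV_def jD_def rq_def C_decr)
    next
      case False
      then show ?thesis using Some \<open>r = i\<close> ji pos
        by (auto simp: jV_def compat_def)
    qed
  next
    case False
    have h1: "\<not> (j = i \<and> 0 < CC (with_tagged n t))"
      using Some False route_i[OF i1, of l "with_tagged n t"] by (auto split: if_splits)
    have h2: "jV l lam mu \<theta> \<sigma> t n (2,j,k) * (f (CC (jD l t n (2,j,k))) - f (CC n)) = 0"
    proof (cases "compat k j \<and> 0 < n r k")
      case True
      then have "CC (jD l t n (2,j,k)) = CC n"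
        using Some False i1 il by (simp add: jD_def rq_def C_decr)
      then show ?thesis by simp
    next
      case False
      then show ?thesis using Some by (auto simp: jV_def)
    qed
    show ?thesis by (simp only: h2) (use h1 in simp)
  qed
qed

lemma agg2:
  fixes f :: "nat \<Rightarrow> real"
  shows "(\<Sum>j\<le>l. \<Sum>k\<le>l. jV l lam mu \<theta> \<sigma> t n (2,j,k) * (f (CC (jD l t n (2,j,k))) - f (CC n)))
     = (if 0 < CC (with_tagged n t) then mu i * real (CC n) / real (CC (with_tagged n t)) else 0)
        * (f (CC n - 1) - f (CC n))"
proof -
  define X where "X = f (CC n - 1) - f (CC n)"
  define M where "M = CC (with_tagged n t)"
  have "(\<Sum>j\<le>l. \<Sum>k\<le>l. jV l lam mu \<theta> \<sigma> t n (2,j,k) * (f (CC (jD l t n (2,j,k))) - f (CC n)))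
     = (\<Sum>j\<le>l. \<Sum>k\<le>l. if j = i \<and> 0 < M \<and> (k = 0 \<or> k = i) then mu i * real (n i k) / real M * X else 0)"
    unfolding X_def M_def by (intro sum.cong refl agg2_pt) auto
  also have "\<dots> = (\<Sum>j\<le>l. if j = i then (if 0 < M then (\<Sum>k\<le>l. if k = 0 \<or> k = i then mu i * real (n i k) / real M * X else 0) else 0) else 0)"
    by (intro sum.cong refl) auto
  also have "\<dots> = (if 0 < M then mu i * real (n i 0) / real M * X + mu i * real (n i i) / real M * X else 0)"
    using il i1 by (simp add: sum_two)
  also have "\<dots> = (if 0 < M then mu i * real (CC n) / real M else 0) * X"
    using il i1 by (simp add: cc_spec add_divide_distrib algebra_simps)
  finally show ?thesis unfolding X_def M_def .
qed

end



definition sz :: "nat \<Rightarrow> state \<Rightarrow> nat" where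
  "sz l n = (\<Sum>r\<le>l. \<Sum>k\<le>l. n r k)"

lemma sz_incr: "r \<le> l \<Longrightarrow> k \<le> l \<Longrightarrow> sz l (incr n r k) = Suc (sz l n)"
proof -
  assume r: "r \<le> l" and k: "k \<le> l"
  have "sz l (incr n r k) = (\<Sum>r'\<le>l. \<Sum>k'\<le>l. n r' k' + (if r' = r \<and> k' = k then 1 else 0))"
    unfolding sz_def by (intro sum.cong refl) (auto simp: incr_apply)
  also have "\<dots> = sz l n + (\<Sum>r'\<le>l. \<Sum>k'\<le>l. (if r' = r \<and> k' = k then 1 else 0))"
    unfolding sz_def by (simp add: sum.distrib)
  also have "(\<Sum>r'\<le>l. \<Sum>k'\<le>l. (if r' = r \<and> k' = k then 1 else 0::nat)) = (\<Sum>r'\<le>l. if r' = r then 1 else 0)"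
    using k by (intro sum.cong refl) auto
  also have "\<dots> = 1" using r by simp
  finally show ?thesis by simp
qed

lemma sz_decr: "sz l (decr n r k) \<le> sz l n"
  unfolding sz_def by (intro sum_mono) (auto simp: decr_apply)

lemma with_tagged_ge: "n r k \<le> with_tagged n t r k"
  by (cases t) (auto simp: with_tagged_def incr_apply)

lemma cc_mono: "(\<And>r k. n r k \<le> m r k) \<Longrightarrow> compat_count l n r j \<le> compat_count l m r j"
  unfolding compat_count_def by (intro sum_mono) auto

context
  fixes l :: nat and lam mu :: "nat \<Rightarrow> real" and \<theta> :: real and \<sigma> :: "nat \<Rightarrow> nat \<Rightarrow> real" and i q :: nat
  assumes lam: "\<forall>k\<le>l. 0 < lam k" and mu: "\<forall>j\<le>l. 0 < mu j" and th: "0 < \<theta>"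
    and prof: "profile l \<sigma>" and i1: "1 \<le> i" and il: "i \<le> l" and ql: "q \<le> l"
begin

abbreviation "tt \<equiv> Some (q, i)"
abbreviation "CCi n \<equiv> compat_count l n i i"

lemma jV_nn: "y \<in> Yset l \<Longrightarrow> 0 \<le> jV l lam mu \<theta> \<sigma> t n y"
  using lam mu th prof unfolding Yset_def profile_def
  by (auto simp: jV_def split: option.splits intro!: mult_nonneg_nonneg divide_nonneg_nonneg)

lemma szD: "y \<in> Yset l \<Longrightarrow> sz l (jD l t n y) \<le> Suc (sz l n)"
  unfolding Yset_def using sz_decr
  by (auto simp: jD_def sz_incr le_SucI)

lemma G2_bound: "j \<le> l \<Longrightarrow> (\<Sum>k\<le>l. jV l lam mu \<theta> \<sigma> t n (2,j,k)) \<le> mu j"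
proof (cases "route l (with_tagged n t) j")
  case None
  assume "j \<le> l"
  then show ?thesis using None mu by (simp add: jV_def less_imp_le)
next
  case (Some r)
  assume jl: "j \<le> l"
  define M where "M = compat_count l (with_tagged n t) r j"
  have Mpos: "0 < M" unfolding M_def by (rule route_Some_pos[OF Some])
  have "(\<Sum>k\<le>l. jV l lam mu \<theta> \<sigma> t n (2,j,k)) \<le> (\<Sum>k\<le>l. mu j / real M * real (if compat k j then n r k else 0))"
    using Some mu jl by (intro sum_mono) (auto simp: jV_def M_def)
  also have "\<dots> = mu j / real M * real (compat_count l n r j)"
    by (simp add: compat_count_def sum_distrib_left)
  also have "\<dots> \<le> mu j / real M * real M"
    using mu jl cc_mono[of n "with_tagged n t" l r j, OF with_tagged_ge] unfolding M_def
    by (intro mult_left_mono) auto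
  also have "\<dots> = mu j" using Mpos by simp
  finally show ?thesis .
qed

definition A0 where "A0 = 1 + (\<Sum>a\<le>l. \<Sum>b\<le>l. lam a * \<sigma> a b) + (\<Sum>j\<le>l. mu j)"

lemma A0_pos: "0 < A0"
proof -
  have "0 \<le> (\<Sum>a\<le>l. \<Sum>b\<le>l. lam a * \<sigma> a b)"
    using lam prof unfolding profile_def by (intro sum_nonneg) (auto intro: mult_nonneg_nonneg less_imp_le)
  moreover have "0 \<le> (\<Sum>j\<le>l. mu j)" using mu by (intro sum_nonneg) (auto intro: less_imp_le)
  ultimately show ?thesis unfolding A0_def by linarith
qed

lemma R_bound: "(\<Sum>y\<in>Yset l. jV l lam mu \<theta> \<sigma> t n y) \<le> A0 + \<theta> * real (sz l n)"
proof -
  have g1: "(\<Sum>a\<le>l. \<Sum>b\<le>l. jV l lam mu \<theta> \<sigma> t n (1,a,b)) = \<theta> * real (sz l n)"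
    unfolding sz_def by (simp add: jV_def sum_distrib_left) (intro sum.cong refl, auto)
  have g0: "(\<Sum>a\<le>l. \<Sum>b\<le>l. jV l lam mu \<theta> \<sigma> t n (0,a,b)) = (\<Sum>a\<le>l. \<Sum>b\<le>l. lam a * \<sigma> a b)"
    by (simp add: jV_def)
  have g2: "(\<Sum>a\<le>l. \<Sum>b\<le>l. jV l lam mu \<theta> \<sigma> t n (2,a,b)) \<le> (\<Sum>j\<le>l. mu j)"
    by (intro sum_mono G2_bound) auto
  show ?thesis unfolding sum_Yset g0 g1 A0_def using g2 by linarith
qed

lemma agg:
  fixes f :: "nat \<Rightarrow> real"
  shows "(\<Sum>y\<in>Yset l. jV l lam mu \<theta> \<sigma> t n y * f (CCi (jD l t n y)))
    = (\<Sum>y\<in>Yset l. jV l lam mu \<theta> \<sigma> t n y) * f (CCi n)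
      + (lam 0 * \<sigma> 0 i + lam i * \<sigma> i i) * (f (Suc (CCi n)) - f (CCi n))
      + (\<theta> * real (CCi n) + (if 0 < CCi (with_tagged n t) then mu i * real (CCi n) / real (CCi (with_tagged n t)) else 0))
        * (f (CCi n - 1) - f (CCi n))"
proof -
  have "(\<Sum>y\<in>Yset l. jV l lam mu \<theta> \<sigma> t n y * (f (CCi (jD l t n y)) - f (CCi n)))
     = (lam 0 * \<sigma> 0 i + lam i * \<sigma> i i) * (f (Suc (CCi n)) - f (CCi n))
      + (\<theta> * real (CCi n) + (if 0 < CCi (with_tagged n t) then mu i * real (CCi n) / real (CCi (with_tagged n t)) else 0))
        * (f (CCi n - 1) - f (CCi n))"
    unfolding sum_Yset agg0[OF i1 il ql] agg1[OF i1 il ql] agg2[OF i1 il ql]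
    by (simp add: algebra_simps)
  moreover have "(\<Sum>y\<in>Yset l. jV l lam mu \<theta> \<sigma> t n y * f (CCi (jD l t n y)))
     = (\<Sum>y\<in>Yset l. jV l lam mu \<theta> \<sigma> t n y * (f (CCi (jD l t n y)) - f (CCi n)))
       + (\<Sum>y\<in>Yset l. jV l lam mu \<theta> \<sigma> t n y) * f (CCi n)"
    by (simp add: algebra_simps sum_distrib_right sum_distrib_left sum_subtractf)
  ultimately show ?thesis by simp
qed

end



definition FF where "FF l lam mu \<theta> \<sigma> i q h n =
  (1 + (\<Sum>y\<in>Yset l. ennreal (jV l lam mu \<theta> \<sigma> (Some (q,i)) n y) * h (jD l (Some (q,i)) n y)))
   / (ennreal (exit_rate l mu \<theta> i q n) + (\<Sum>y\<in>Yset l. ennreal (jV l lam mu \<theta> \<sigma> (Some (q,i)) n y)))"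

lemma finite_Yset[simp]: "finite (Yset l)" by (simp add: Yset_def)

lemma ineq_up:
  fixes a \<theta> \<mu> X Y Z R :: real and c :: nat
  assumes eq: "(eB \<theta> \<mu> c + a + dd \<theta> \<mu> c) * Z = 1 + a * X + dd \<theta> \<mu> c * Y"
    and Y: "0 \<le> Y" and mu: "0 \<le> \<mu>"
  shows "1 + (R * Z + a * (X - Z) + (\<theta> * real c + \<mu> * real c / real (Suc c)) * (Y - Z))
     \<le> (\<theta> + \<mu> / real (Suc c) + R) * Z"
proof (cases "c = 0")
  case True
  then show ?thesis using eq by (simp add: eB_def dd_def algebra_simps)
next
  case False
  define p where "p = \<mu> / real (Suc c)"
  have p0: "0 \<le> p" unfolding p_def using mu by simp
  have mc: "\<mu> * real c / real (Suc c) = \<mu> - p" unfolding p_def by (simp add: field_simps)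
  have eq': "1 + a * (X - Z) + (\<theta> * real c + \<mu>) * (Y - Z) = \<theta> * Z"
    using eq False by (simp add: eB_def dd_def algebra_simps)
  have "1 + (R * Z + a * (X - Z) + (\<theta> * real c + (\<mu> - p)) * (Y - Z))
      = (1 + a * (X - Z) + (\<theta> * real c + \<mu>) * (Y - Z)) + R * Z - p * Y + p * Z"
    by (simp add: algebra_simps)
  also have "\<dots> = \<theta> * Z + R * Z - p * Y + p * Z" by (simp only: eq')
  also have "\<dots> \<le> (\<theta> + p + R) * Z" using p0 Y by (simp add: algebra_simps)
  finally show ?thesis unfolding mc p_def .
qed

lemma ineq_low:
  fixes a \<theta> \<mu> X Y Z R e :: real and c :: nat
  assumes eq: "(eB \<theta> \<mu> c + a + dd \<theta> \<mu> c) * Z = 1 + a * X + dd \<theta> \<mu> c * Y"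
    and Z: "0 \<le> Z" and e: "e \<le> eB \<theta> \<mu> c"
  shows "(e + R) * Z \<le> 1 + (R * Z + a * (X - Z) + (\<theta> * real c + (if 0 < c then \<mu> * real c / real c else 0)) * (Y - Z))"
proof -
  have dd: "\<theta> * real c + (if 0 < c then \<mu> * real c / real c else 0) = dd \<theta> \<mu> c"
    unfolding dd_def by auto
  have eq': "1 + a * (X - Z) + dd \<theta> \<mu> c * (Y - Z) = eB \<theta> \<mu> c * Z"
    using eq by (simp add: algebra_simps)
  have "e * Z \<le> eB \<theta> \<mu> c * Z" using e Z by (rule mult_right_mono)
  then show ?thesis unfolding dd using eq' by (simp add: algebra_simps)
qed

context
  fixes l :: nat and lam mu :: "nat \<Rightarrow> real" and \<theta> :: real and \<sigma> :: "nat \<Rightarrow> nat \<Rightarrow> real" and i q :: nat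
  assumes lam: "\<forall>k\<le>l. 0 < lam k" and mu: "\<forall>j\<le>l. 0 < mu j" and th: "0 < \<theta>"
    and prof: "profile l \<sigma>" and i1: "1 \<le> i" and il: "i \<le> l" and ql: "q \<le> l"
begin

abbreviation "CCj n \<equiv> compat_count l n i i"
abbreviation "aa \<equiv> lam 0 * \<sigma> 0 i + lam i * \<sigma> i i"
abbreviation "g \<equiv> gr aa \<theta> (mu i)"

lemma aa_nn: "0 \<le> aa"
proof -
  have "0 \<le> lam 0" "0 \<le> lam i" using lam il by (auto intro: less_imp_le)
  moreover have "0 \<le> \<sigma> 0 i" "0 \<le> \<sigma> i i" using prof il unfolding profile_def by auto
  ultimately show ?thesis by simp
qed

lemma mui: "0 < mu i" using mu il by simp

lemma g_props: "0 \<le> g c" "g c \<le> 1 / \<theta>"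
   "(eB \<theta> (mu i) c + aa + dd \<theta> (mu i) c) * g c = 1 + aa * g (Suc c) + dd \<theta> (mu i) c * g (c - 1)"
  using gr_props[OF aa_nn th mui] by auto

lemma sojourn_FF: "sojourn l lam mu \<theta> \<sigma> i q = lfp (FF l lam mu \<theta> \<sigma> i q)"
proof -
  have e1: "(\<Sum>\<^sub>\<infinity>n'. ennreal (rate l lam mu \<theta> \<sigma> (Some (q, i)) n n') * h n')
      = (\<Sum>y\<in>Yset l. ennreal (jV l lam mu \<theta> \<sigma> (Some (q,i)) n y) * h (jD l (Some (q,i)) n y))" for h n
    unfolding rate_repr
    by (rule infsum_repr) (auto intro: jV_nn[OF lam mu th prof i1 il ql])
  have e2: "(\<Sum>\<^sub>\<infinity>n'. ennreal (rate l lam mu \<theta> \<sigma> (Some (q, i)) n n'))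
      = (\<Sum>y\<in>Yset l. ennreal (jV l lam mu \<theta> \<sigma> (Some (q,i)) n y))" for n
    using e1[of n "\<lambda>_. 1"] by simp
  show ?thesis unfolding sojourn_def e1 e2 FF_def ..
qed

lemma FF_w:
  assumes f0: "\<And>c. 0 \<le> f c"
  shows "FF l lam mu \<theta> \<sigma> i q (\<lambda>n. ennreal (f (CCj n))) n
    = ennreal ((1 + (\<Sum>y\<in>Yset l. jV l lam mu \<theta> \<sigma> (Some (q,i)) n y * f (CCj (jD l (Some (q,i)) n y))))
       / (exit_rate l mu \<theta> i q n + (\<Sum>y\<in>Yset l. jV l lam mu \<theta> \<sigma> (Some (q,i)) n y)))"
proof -
  note nn = jV_nn[OF lam mu th prof i1 il ql]
  have s1: "(\<Sum>y\<in>Yset l. ennreal (jV l lam mu \<theta> \<sigma> (Some (q,i)) n y) * ennreal (f (CCj (jD l (Some (q,i)) n y))))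
      = ennreal (\<Sum>y\<in>Yset l. jV l lam mu \<theta> \<sigma> (Some (q,i)) n y * f (CCj (jD l (Some (q,i)) n y)))"
    using nn f0 by (simp add: ennreal_mult[symmetric] mult_nonneg_nonneg)
  have s2: "(\<Sum>y\<in>Yset l. ennreal (jV l lam mu \<theta> \<sigma> (Some (q,i)) n y))
      = ennreal (\<Sum>y\<in>Yset l. jV l lam mu \<theta> \<sigma> (Some (q,i)) n y)"
    using nn by simp
  have S0: "0 \<le> (\<Sum>y\<in>Yset l. jV l lam mu \<theta> \<sigma> (Some (q,i)) n y * f (CCj (jD l (Some (q,i)) n y)))"
    using nn f0 by (intro sum_nonneg mult_nonneg_nonneg) auto
  have R0: "0 \<le> (\<Sum>y\<in>Yset l. jV l lam mu \<theta> \<sigma> (Some (q,i)) n y)"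
    using nn by (intro sum_nonneg) auto
  have e0: "\<theta> \<le> exit_rate l mu \<theta> i q n"
    unfolding exit_rate_eq[OF i1 il] using mui by auto
  have p1: "1 + ennreal (\<Sum>y\<in>Yset l. jV l lam mu \<theta> \<sigma> (Some (q,i)) n y * f (CCj (jD l (Some (q,i)) n y)))
     = ennreal (1 + (\<Sum>y\<in>Yset l. jV l lam mu \<theta> \<sigma> (Some (q,i)) n y * f (CCj (jD l (Some (q,i)) n y))))"
    using S0 by simp
  have p2: "ennreal (exit_rate l mu \<theta> i q n) + ennreal (\<Sum>y\<in>Yset l. jV l lam mu \<theta> \<sigma> (Some (q,i)) n y)
     = ennreal (exit_rate l mu \<theta> i q n + (\<Sum>y\<in>Yset l. jV l lam mu \<theta> \<sigma> (Some (q,i)) n y))"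
    using R0 e0 th by simp
  show ?thesis unfolding FF_def s1 s2 p1 p2 using S0 R0 e0 th
    by (intro divide_ennreal) auto
qed

lemma exit_ge: "\<theta> \<le> exit_rate l mu \<theta> i q n"
  unfolding exit_rate_eq[OF i1 il] using mui by auto

lemma upper:
  assumes qi: "q = i"
  shows "sojourn l lam mu \<theta> \<sigma> i q n \<le> ennreal (g (CCj n))"
proof -
  have "FF l lam mu \<theta> \<sigma> i q (\<lambda>n. ennreal (g (CCj n))) \<le> (\<lambda>n. ennreal (g (CCj n)))"
  proof (rule le_funI)
    fix n
    define c where "c = CCj n"
    define R where "R = (\<Sum>y\<in>Yset l. jV l lam mu \<theta> \<sigma> (Some (q,i)) n y)"
    define S where "S = (\<Sum>y\<in>Yset l. jV l lam mu \<theta> \<sigma> (Some (q,i)) n y * g (CCj (jD l (Some (q,i)) n y)))"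
    define e where "e = exit_rate l mu \<theta> i q n"
    have R0: "0 \<le> R" unfolding R_def using jV_nn[OF lam mu th prof i1 il ql] by (intro sum_nonneg) auto
    have ccm: "CCj (with_tagged n (Some (q,i))) = Suc c"
      unfolding c_def with_tagged_def using qi C_incr[OF i1 il] by simp
    have Sx: "S = R * g c + aa * (g (Suc c) - g c) + (\<theta> * real c + mu i * real c / real (Suc c)) * (g (c - 1) - g c)"
      unfolding S_def R_def c_def agg[OF lam mu th prof i1 il ql] using ccm c_def by simp
    have ex: "e = \<theta> + mu i / real (Suc c)"
    proof -
      have "CCj (incr n q i) = Suc c" using ccm by (simp add: with_tagged_def)
      then show ?thesis unfolding e_def exit_rate_eq[OF i1 il] using qi route_i[OF i1, of l "incr n i i"] by simp
    qed
    have e0: "\<theta> \<le> e" unfolding e_def by (rule exit_ge)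
    have key: "1 + S \<le> (e + R) * g c"
      unfolding Sx ex by (rule ineq_up[OF g_props(3) g_props(1)]) (use mui in simp)
    have "(1 + S) / (e + R) \<le> g c" using key e0 R0 th by (simp add: pos_divide_le_eq mult.commute)
    then show "FF l lam mu \<theta> \<sigma> i q (\<lambda>n. ennreal (g (CCj n))) n \<le> ennreal (g (CCj n))"
      using FF_w[where f = g, OF g_props(1), of n] c_def R_def S_def e_def by (simp add: ennreal_leI)
  qed
  then have "lfp (FF l lam mu \<theta> \<sigma> i q) \<le> (\<lambda>n. ennreal (g (CCj n)))" by (rule lfp_lowerbound)
  then show ?thesis unfolding sojourn_FF by (simp add: le_fun_def)
qed

lemma lower:
  assumes qi: "q \<noteq> i"
  shows "ennreal (g (CCj n)) \<le> sojourn l lam mu \<theta> \<sigma> i q n"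
proof -
  have sub: "ennreal (g (CCj n)) \<le> FF l lam mu \<theta> \<sigma> i q (\<lambda>n. ennreal (g (CCj n))) n" for n
  proof -
    define c where "c = CCj n"
    define R where "R = (\<Sum>y\<in>Yset l. jV l lam mu \<theta> \<sigma> (Some (q,i)) n y)"
    define S where "S = (\<Sum>y\<in>Yset l. jV l lam mu \<theta> \<sigma> (Some (q,i)) n y * g (CCj (jD l (Some (q,i)) n y)))"
    define e where "e = exit_rate l mu \<theta> i q n"
    have R0: "0 \<le> R" unfolding R_def using jV_nn[OF lam mu th prof i1 il ql] by (intro sum_nonneg) auto
    have ccm: "CCj (incr n q i) = c"
      unfolding c_def using qi C_incr[OF i1 il] by simp
    have Sx: "S = R * g c + aa * (g (Suc c) - g c) + (\<theta> * real c + (if 0 < c then mu i * real c / real c else 0)) * (g (c - 1) - g c)"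
      unfolding S_def R_def c_def agg[OF lam mu th prof i1 il ql] using ccm c_def by (simp add: with_tagged_def)
    have eb: "e \<le> eB \<theta> (mu i) c"
    proof (cases "route l (incr n q i) i = Some q")
      case True
      then have c0: "c = 0" and pos: "0 < compat_count l (incr n q i) 0 i" and q0: "q = 0"
        using route_i[OF i1, of l "incr n q i"] qi ccm by (auto split: if_splits)
      have "mu i / real (compat_count l (incr n q i) q i) \<le> mu i"
        using pos q0 mui by (simp add: divide_le_eq)
      then show ?thesis unfolding e_def exit_rate_eq[OF i1 il] eB_def using True c0 by simp
    next
      case False
      then show ?thesis unfolding e_def exit_rate_eq[OF i1 il] eB_def using mui by simp
    qed
    have e0: "\<theta> \<le> e" unfolding e_def by (rule exit_ge)
    have key: "(e + R) * g c \<le> 1 + S"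
      unfolding Sx by (rule ineq_low[OF g_props(3) g_props(1) eb])
    have "g c \<le> (1 + S) / (e + R)" using key e0 R0 th by (simp add: pos_le_divide_eq mult.commute)
    then show ?thesis
      using FF_w[where f = g, OF g_props(1), of n] c_def R_def S_def e_def by (simp add: ennreal_leI)
  qed
  have Feq: "\<And>h n. FF l lam mu \<theta> \<sigma> i q h n = (1 + (\<Sum>y\<in>Yset l. ennreal (jV l lam mu \<theta> \<sigma> (Some (q,i)) n y) * h (jD l (Some (q,i)) n y)))
   / (ennreal (exit_rate l mu \<theta> i q n) + (\<Sum>y\<in>Yset l. ennreal (jV l lam mu \<theta> \<sigma> (Some (q,i)) n y)))"
    by (simp add: FF_def)
  have wb: "ennreal (g (CCj n)) \<le> ennreal (1 / \<theta>)" for n using g_props(2) by (rule ennreal_leI)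
  have W0: "0 \<le> 1 / \<theta>" using th by simp
  show ?thesis unfolding sojourn_FF
    by (rule lfp_lower_generic[where F="FF l lam mu \<theta> \<sigma> i q" and Y="Yset l"
        and V="\<lambda>n y. jV l lam mu \<theta> \<sigma> (Some (q,i)) n y" and D="\<lambda>n y. jD l (Some (q,i)) n y"
        and e="\<lambda>n. exit_rate l mu \<theta> i q n" and sz="sz l" and w="\<lambda>n. ennreal (g (CCj n))"
        and W="1 / \<theta>" and \<theta>=\<theta>, OF Feq finite_Yset jV_nn[OF lam mu th prof i1 il ql] th exit_ge
        A0_pos[OF lam mu th prof i1 il ql] R_bound[OF lam mu th prof i1 il ql] szD[OF lam mu th prof i1 il ql]
        wb W0 sub])
qed

end


theorem lemma2:
  fixes l :: nat and lam mu :: "nat \<Rightarrow> real" and \<theta> :: real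
    and \<sigma> :: "nat \<Rightarrow> nat \<Rightarrow> real" and \<pi> :: "state pmf" and i q :: nat
  assumes "\<forall>k\<le>l. 0 < lam k" and "\<forall>j\<le>l. 0 < mu j" and "0 < \<theta>"
    and "profile l \<sigma>"
    and "stationary l lam mu \<theta> \<sigma> \<pi>"
    and "1 \<le> i" and "i \<le> l" and "q \<le> l"
  shows "expected_wait l lam mu \<theta> \<sigma> \<pi> i i \<le> expected_wait l lam mu \<theta> \<sigma> \<pi> i q"
proof -
  have pt: "sojourn l lam mu \<theta> \<sigma> i i n \<le> sojourn l lam mu \<theta> \<sigma> i q n" for n
  proof (cases "q = i")
    case True
    then show ?thesis by simp
  next
    case False
    have "sojourn l lam mu \<theta> \<sigma> i i n
        \<le> ennreal (gr (lam 0 * \<sigma> 0 i + lam i * \<sigma> i i) \<theta> (mu i) (compat_count l n i i))"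
      by (rule upper[where q=i, OF assms(1) assms(2) assms(3) assms(4) assms(6) assms(7) assms(7) refl])
    also have "\<dots> \<le> sojourn l lam mu \<theta> \<sigma> i q n"
      by (rule lower[OF assms(1) assms(2) assms(3) assms(4) assms(6) assms(7) assms(8) False])
    finally show ?thesis .
  qed
  show ?thesis unfolding expected_wait_def
    by (intro infsum_mono nonneg_summable_on_complete mult_left_mono pt) auto
qed

end
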